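(* Let $\mathcal{F}$ be a finite set of graphs, $T\ge0$, and let $(G_1,y_1),\dots,(G_s,y_s)\in\mathcal{G}_n\times\{0,1\}$ be a sample (with both labels occurring) such that $(\phi^{(T)}_{\mathsf{WLOA}}(G_i),y_i)_{i\le s}$ is linearly separable with margin $\gamma$. If $$\min_{y_i\ne y_j}\Big(\big\|\phi^{(T)}_{\mathsf{WLOA},\mathcal{F}}(G_i)-\phi^{(T)}_{\mathsf{WLOA},\mathcal{F}}(G_j)\big\|^2-\big\|\phi^{(T)}_{\mathsf{WLOA}}(G_i)-\phi^{(T)}_{\mathsf{WLOA}}(G_j)\big\|^2\Big)>\max_{y_i=y_j}\Big(\big\|\phi^{(T)}_{\mathsf{WLOA},\mathcal{F}}(G_i)-\phi^{(T)}_{\mathsf{WLOA},\mathcal{F}}(G_j)\big\|^2-\big\|\phi^{(T)}_{\mathsf{WLOA}}(G_i)-\phi^{(T)}_{\mathsf{WLOA}}(G_j)\big\|^2\Big),$$ then the margin $\lambda$ of the sample $(\phi^{(T)}_{\mathsf{WLOA},\mathcal{F}}(G_i),y_i)_{i\le s}$ satisfies $\lambda>\gamma$.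
   Context: $\mathcal{G}_n$ is the set of (unlabeled, simple, undirected) graphs on $n$ vertices. $1$-WL: $C^1_0$ constant, $C^1_t(v)=\mathsf{RELABEL}(C^1_{t-1}(v),\{\!\{C^1_{t-1}(u):u\in N(v)\}\!\})$ with a fixed injective $\mathsf{RELABEL}$ shared by all graphs. $1$-WL$_{\mathcal{F}}$: same update with initial colour $(\ell_F(v))_{F\in\mathcal{F}}$, $\ell_F(v)=1$ if $v$ lies in a vertex set $X$ with induced subgraph $G[X]$ isomorphic to $F$, else $0$. With $\phi_t(G)_c$ (resp. $\phi_{\mathcal{F},t}(G)_c$) the number of vertices of $G$ of colour $c$ at round $t$, $\phi^{(T)}_{\mathsf{WLOA}}(G)$ is the $0/1$ vector with one coordinate per $(t,c,j)$ ($t\le T$, $c$ a round-$t$ colour, $j\in\{1,\dots,n\}$) equal to $1$ iff $\phi_t(G)_c\ge j$; $\phi^{(T)}_{\mathsf{WLOA},\mathcal{F}}$ likewise from the $1$-WL$_{\mathcal{F}}$ counts. The margin of a linearly separable labelled sample is half the Euclidean distance between the convex hulls of the two classes (the hard-margin SVM margin). *)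

theory Defs
  imports Complex_Main "HOL-Library.Multiset"
begin

text \<open>Simple undirected graphs with vertex set {0..<n}, given by an edge relation.
  Unlabelled graphs are represented by labelled representatives; all notions below are
  isomorphism invariant.\<close>

type_synonym rel = "nat \<Rightarrow> nat \<Rightarrow> bool"

definition graph_on :: "nat \<Rightarrow> rel \<Rightarrow> bool" where
  "graph_on n E \<longleftrightarrow> (\<forall>u v. E u v \<longrightarrow> u < n \<and> v < n) \<and> (\<forall>u v. E u v \<longrightarrow> E v u) \<and> (\<forall>v. \<not> E v v)"

text \<open>A pattern graph: number of vertices k and edge relation on {0..<k}.\<close>
type_synonym pattern = "nat \<times> rel"

definition induced_iso :: "pattern \<Rightarrow> rel \<Rightarrow> nat set \<Rightarrow> bool" where
  "induced_iso F E X \<longleftrightarrow> (\<exists>f. bij_betw f {0..<fst F} X \<and>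
      (\<forall>a<fst F. \<forall>b<fst F. snd F a b \<longleftrightarrow> E (f a) (f b)))"

definition ell :: "pattern \<Rightarrow> nat \<Rightarrow> rel \<Rightarrow> nat \<Rightarrow> bool" where
  "ell F n E v \<longleftrightarrow> (\<exists>X. X \<subseteq> {0..<n} \<and> v \<in> X \<and> induced_iso F E X)"

text \<open>WL colours; the injective RELABEL is the free constructor Step.\<close>
datatype 'a wlcol = Init 'a | Step "'a wlcol" "'a wlcol multiset"

fun wl :: "(nat \<Rightarrow> 'a) \<Rightarrow> nat \<Rightarrow> rel \<Rightarrow> nat \<Rightarrow> nat \<Rightarrow> 'a wlcol" where
  "wl init n E 0 v = Init (init v)"
| "wl init n E (Suc t) v =
     Step (wl init n E t v) (image_mset (wl init n E t) (mset_set {u. u < n \<and> E v u}))"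

text \<open>Initial colourings: constant for 1-WL; (\<ell>_F(v))_{F\<in>\<F>} (encoded as the set of F
  with \<ell>_F(v)=1) for 1-WL_\<F>.\<close>
definition init_plain :: "nat \<Rightarrow> rel \<Rightarrow> nat \<Rightarrow> unit" where
  "init_plain n E v = ()"

definition init_F :: "pattern set \<Rightarrow> nat \<Rightarrow> rel \<Rightarrow> nat \<Rightarrow> pattern set" where
  "init_F \<F> n E v = {F \<in> \<F>. ell F n E v}"

definition colour_count :: "(nat \<Rightarrow> rel \<Rightarrow> nat \<Rightarrow> 'a) \<Rightarrow> nat \<Rightarrow> rel \<Rightarrow> nat \<Rightarrow> 'a wlcol \<Rightarrow> nat" where
  "colour_count initf n E t c = card {v. v < n \<and> wl (initf n E) n E t v = c}"

definition coords :: "(nat \<Rightarrow> rel \<Rightarrow> nat \<Rightarrow> 'a) \<Rightarrow> nat \<Rightarrow> nat \<Rightarrow> (nat \<times> 'a wlcol \<times> nat) set" where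
  "coords initf n T = {(t, c, j). t \<le> T \<and>
      (\<exists>E v. graph_on n E \<and> v < n \<and> c = wl (initf n E) n E t v) \<and> 1 \<le> j \<and> j \<le> n}"

definition phi_WLOA :: "(nat \<Rightarrow> rel \<Rightarrow> nat \<Rightarrow> 'a) \<Rightarrow> nat \<Rightarrow> nat \<Rightarrow> rel \<Rightarrow> (nat \<times> 'a wlcol \<times> nat) \<Rightarrow> real" where
  "phi_WLOA initf n T E = (\<lambda>(t, c, j). if colour_count initf n E t c \<ge> j then 1 else 0)"

definition sqdist :: "'k set \<Rightarrow> ('k \<Rightarrow> real) \<Rightarrow> ('k \<Rightarrow> real) \<Rightarrow> real" where
  "sqdist I p q = (\<Sum>k\<in>I. (p k - q k)^2)"

definition edist :: "'k set \<Rightarrow> ('k \<Rightarrow> real) \<Rightarrow> ('k \<Rightarrow> real) \<Rightarrow> real" where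
  "edist I p q = sqrt (sqdist I p q)"

definition class_hull :: "nat \<Rightarrow> (nat \<Rightarrow> 'k \<Rightarrow> real) \<Rightarrow> (nat \<Rightarrow> bool) \<Rightarrow> bool \<Rightarrow> ('k \<Rightarrow> real) set" where
  "class_hull s x y b = {(\<lambda>k. \<Sum>i\<in>{i. i < s \<and> y i = b}. a i * x i k) | a.
      (\<forall>i. 0 \<le> a i) \<and> (\<Sum>i\<in>{i. i < s \<and> y i = b}. a i) = 1}"

definition lin_separable :: "'k set \<Rightarrow> nat \<Rightarrow> (nat \<Rightarrow> 'k \<Rightarrow> real) \<Rightarrow> (nat \<Rightarrow> bool) \<Rightarrow> bool" where
  "lin_separable I s x y \<longleftrightarrow> (\<exists>w b. \<forall>i<s.
      (y i \<longrightarrow> (\<Sum>k\<in>I. w k * x i k) + b > 0) \<and> (\<not> y i \<longrightarrow> (\<Sum>k\<in>I. w k * x i k) + b < 0))"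

definition margin :: "'k set \<Rightarrow> nat \<Rightarrow> (nat \<Rightarrow> 'k \<Rightarrow> real) \<Rightarrow> (nat \<Rightarrow> bool) \<Rightarrow> real" where
  "margin I s x y = Inf {edist I p q | p q. p \<in> class_hull s x y True \<and> q \<in> class_hull s x y False} / 2"

end

theory Submission
  imports Defs
begin

lemma pt_aux:
  fixes a b u :: "nat \<Rightarrow> real"
  shows "(\<Sum>i\<in>A. \<Sum>j\<in>B. a i * b j * (u i - u j)^2)
     = (\<Sum>i\<in>A. a i * (u i)^2) * sum b B + (\<Sum>i\<in>A. a i) * (\<Sum>j\<in>B. b j * (u j)^2)
       - 2 * (\<Sum>i\<in>A. a i * u i) * (\<Sum>j\<in>B. b j * u j)"
proof -
  have "(\<Sum>i\<in>A. \<Sum>j\<in>B. a i * b j * (u i - u j)^2)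
      = (\<Sum>i\<in>A. (a i * (u i)^2) * sum b B + a i * (\<Sum>j\<in>B. b j * (u j)^2) - 2 * (a i * u i) * (\<Sum>j\<in>B. b j * u j))"
  proof (intro sum.cong refl)
    fix i
    have "(\<Sum>j\<in>B. a i * b j * (u i - u j)^2) = (\<Sum>j\<in>B. (a i * (u i)^2) * b j + a i * (b j * (u j)^2) - (2 * (a i * u i)) * (b j * u j))"
      by (intro sum.cong refl) (simp add: power2_diff algebra_simps)
    also have "\<dots> = (a i * (u i)^2) * sum b B + a i * (\<Sum>j\<in>B. b j * (u j)^2) - 2 * (a i * u i) * (\<Sum>j\<in>B. b j * u j)"
      by (simp only: sum.distrib sum_subtractf sum_distrib_left)
    finally show "(\<Sum>j\<in>B. a i * b j * (u i - u j)^2) = (a i * (u i)^2) * sum b B + a i * (\<Sum>j\<in>B. b j * (u j)^2) - 2 * (a i * u i) * (\<Sum>j\<in>B. b j * u j)" .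
  qed
  also have "\<dots> = (\<Sum>i\<in>A. a i * (u i)^2) * sum b B + (\<Sum>i\<in>A. a i) * (\<Sum>j\<in>B. b j * (u j)^2)
       - 2 * (\<Sum>i\<in>A. a i * u i) * (\<Sum>j\<in>B. b j * u j)"
    by (simp only: sum.distrib sum_subtractf sum_distrib_right[symmetric] sum_distrib_left[symmetric])
  finally show ?thesis .
qed

lemma pt:
  fixes a b u :: "nat \<Rightarrow> real"
  assumes "sum a A = 1" "sum b B = 1"
  shows "((\<Sum>i\<in>A. a i * u i) - (\<Sum>j\<in>B. b j * u j))^2
    = (\<Sum>i\<in>A. \<Sum>j\<in>B. a i * b j * (u i - u j)^2)
      - (\<Sum>i\<in>A. \<Sum>i'\<in>A. a i * a i' * (u i - u i')^2) / 2
      - (\<Sum>j\<in>B. \<Sum>j'\<in>B. b j * b j' * (u j - u j')^2) / 2"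
proof -
  note h1 = pt_aux[where a=a and b=b and A=A and B=B and u=u]
  note h2 = pt_aux[where a=a and b=a and A=A and B=A and u=u]
  note h3 = pt_aux[where a=b and b=b and A=B and B=B and u=u]
  show ?thesis unfolding h1 h2 h3 assms
    by (simp only: power2_eq_square mult_1_left mult_1_right) algebra
qed

lemma swap3:
  "(\<Sum>k\<in>I. \<Sum>i\<in>A. \<Sum>j\<in>B. (f i j k :: real)) = (\<Sum>i\<in>A. \<Sum>j\<in>B. \<Sum>k\<in>I. f i j k)"
  apply (rule trans[OF sum.swap])
  apply (rule sum.cong[OF refl])
  apply (rule sum.swap)
  done

lemma hull_sqdist:
  fixes a b :: "nat \<Rightarrow> real" and x :: "nat \<Rightarrow> 'k \<Rightarrow> real"
  assumes "sum a A = 1" "sum b B = 1"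
  shows "sqdist I (\<lambda>k. \<Sum>i\<in>A. a i * x i k) (\<lambda>k. \<Sum>j\<in>B. b j * x j k)
    = (\<Sum>i\<in>A. \<Sum>j\<in>B. a i * b j * sqdist I (x i) (x j))
      - (\<Sum>i\<in>A. \<Sum>i'\<in>A. a i * a i' * sqdist I (x i) (x i')) / 2
      - (\<Sum>j\<in>B. \<Sum>j'\<in>B. b j * b j' * sqdist I (x j) (x j')) / 2"
proof -
  have e: "(\<Sum>k\<in>I. \<Sum>i\<in>A. \<Sum>j\<in>B. c i * d j * (x i k - x j k)^2)
     = (\<Sum>i\<in>A. \<Sum>j\<in>B. c i * d j * (\<Sum>k\<in>I. (x i k - x j k)^2))" for c d :: "nat \<Rightarrow> real" and A B
    by (subst swap3) (simp only: sum_distrib_left)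
  show ?thesis
    unfolding sqdist_def
    apply (subst pt[OF assms])
    apply (simp only: sum_subtractf sum_divide_distrib[symmetric] e)
    done
qed


lemma dsum_ge:
  fixes a b :: "nat \<Rightarrow> real"
  assumes "\<And>i j. i \<in> A \<Longrightarrow> j \<in> B \<Longrightarrow> L \<le> f i j" "\<forall>i. 0 \<le> a i" "\<forall>i. 0 \<le> b i"
    "sum a A = 1" "sum b B = 1"
  shows "L \<le> (\<Sum>i\<in>A. \<Sum>j\<in>B. a i * b j * f i j)"
proof -
  have "(\<Sum>i\<in>A. \<Sum>j\<in>B. a i * b j * L) \<le> (\<Sum>i\<in>A. \<Sum>j\<in>B. a i * b j * f i j)"
    using assms by (intro sum_mono mult_left_mono) auto
  moreover have "(\<Sum>i\<in>A. \<Sum>j\<in>B. a i * b j * L) = L"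
    using assms(4,5) by (simp add: sum_distrib_left[symmetric] sum_distrib_right[symmetric])
  ultimately show ?thesis by simp
qed

lemma dsum_le:
  fixes a b :: "nat \<Rightarrow> real"
  assumes "\<And>i j. i \<in> A \<Longrightarrow> j \<in> B \<Longrightarrow> f i j \<le> U" "\<forall>i. 0 \<le> a i" "\<forall>i. 0 \<le> b i"
    "sum a A = 1" "sum b B = 1"
  shows "(\<Sum>i\<in>A. \<Sum>j\<in>B. a i * b j * f i j) \<le> U"
proof -
  have "(\<Sum>i\<in>A. \<Sum>j\<in>B. a i * b j * f i j) \<le> (\<Sum>i\<in>A. \<Sum>j\<in>B. a i * b j * U)"
    using assms by (intro sum_mono mult_left_mono) auto
  moreover have "(\<Sum>i\<in>A. \<Sum>j\<in>B. a i * b j * U) = U"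
    using assms(4,5) by (simp add: sum_distrib_left[symmetric] sum_distrib_right[symmetric])
  ultimately show ?thesis by simp
qed

lemma sqdist_nonneg: "0 \<le> sqdist I p q"
  unfolding sqdist_def by (intro sum_nonneg) auto

lemma key:
  fixes x :: "nat \<Rightarrow> 'k \<Rightarrow> real" and x' :: "nat \<Rightarrow> 'l \<Rightarrow> real"
    and I :: "'k set" and I' :: "'l set"
  assumes ex: "\<exists>i<s. y i" "\<exists>i<s. \<not> y i"
    and bt: "\<And>i j. i<s \<Longrightarrow> j<s \<Longrightarrow> y i \<noteq> y j \<Longrightarrow> L \<le> sqdist I' (x' i) (x' j) - sqdist I (x i) (x j)"
    and wi: "\<And>i j. i<s \<Longrightarrow> j<s \<Longrightarrow> y i = y j \<Longrightarrow> sqdist I' (x' i) (x' j) - sqdist I (x i) (x j) \<le> U"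
    and UL: "U < L"
  shows "margin I s x y < margin I' s x' y"
proof -
  define A where "A = {i. i < s \<and> y i = True}"
  define B where "B = {i. i < s \<and> y i = False}"
  have fA: "finite A" and fB: "finite B" unfolding A_def B_def by auto
  define S where "S = {edist I p q | p q. p \<in> class_hull s x y True \<and> q \<in> class_hull s x y False}"
  define S' where "S' = {edist I' p q | p q. p \<in> class_hull s x' y True \<and> q \<in> class_hull s x' y False}"
  define \<Delta> where "\<Delta> i j = sqdist I' (x' i) (x' j) - sqdist I (x i) (x j)" for i j
  obtain i0 where i0: "i0 \<in> A" using ex(1) unfolding A_def by auto
  obtain j0 where j0: "j0 \<in> B" using ex(2) unfolding B_def by auto
  define a0 where "a0 = (\<lambda>i. if i = i0 then 1 else 0 :: real)"
  define b0 where "b0 = (\<lambda>i. if i = j0 then 1 else 0 :: real)"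
  have a0nn: "\<forall>i. 0 \<le> a0 i" unfolding a0_def by simp
  have b0nn: "\<forall>i. 0 \<le> b0 i" unfolding b0_def by simp
  have a0s: "sum a0 A = 1" unfolding a0_def using fA i0 by simp
  have b0s: "sum b0 B = 1" unfolding b0_def using fB j0 by simp
  have "edist I (\<lambda>k. \<Sum>i\<in>A. a0 i * x i k) (\<lambda>k. \<Sum>i\<in>B. b0 i * x i k) \<in> S"
    unfolding S_def class_hull_def A_def[symmetric] B_def[symmetric]
    using a0s b0s a0nn b0nn by blast
  hence Sne: "S \<noteq> {}" by auto
  have "edist I' (\<lambda>k. \<Sum>i\<in>A. a0 i * x' i k) (\<lambda>k. \<Sum>i\<in>B. b0 i * x' i k) \<in> S'"
    unfolding S'_def class_hull_def A_def[symmetric] B_def[symmetric]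
    using a0s b0s a0nn b0nn by blast
  hence S'ne: "S' \<noteq> {}" by auto
  have Snn: "\<forall>z\<in>S. 0 \<le> z" unfolding S_def edist_def using sqdist_nonneg by auto
  define g where "g = Inf S"
  have g0: "0 \<le> g" unfolding g_def using Sne Snn by (intro cInf_greatest) auto
  have bddS: "bdd_below S" using Snn by (auto intro: bdd_belowI)
  define d where "d = L - U"
  have d0: "0 < d" using UL d_def by simp
  have low: "sqrt (g^2 + d) \<le> z" if zS: "z \<in> S'" for z
  proof -
    obtain a b where a: "\<forall>i. 0 \<le> a i" "sum a A = 1" and b: "\<forall>i. 0 \<le> b i" "sum b B = 1"
      and z: "z = edist I' (\<lambda>k. \<Sum>i\<in>A. a i * x' i k) (\<lambda>k. \<Sum>i\<in>B. b i * x' i k)"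
      using zS unfolding S'_def class_hull_def A_def[symmetric] B_def[symmetric] by blast
    let ?e = "edist I (\<lambda>k. \<Sum>i\<in>A. a i * x i k) (\<lambda>k. \<Sum>i\<in>B. b i * x i k)"
    have "?e \<in> S"
      unfolding S_def class_hull_def A_def[symmetric] B_def[symmetric] using a b by blast
    hence ge: "g \<le> ?e" unfolding g_def using bddS by (rule cInf_lower)
    let ?q = "sqdist I (\<lambda>k. \<Sum>i\<in>A. a i * x i k) (\<lambda>k. \<Sum>i\<in>B. b i * x i k)"
    let ?q' = "sqdist I' (\<lambda>k. \<Sum>i\<in>A. a i * x' i k) (\<lambda>k. \<Sum>i\<in>B. b i * x' i k)"
    have "g^2 \<le> ?q"
    proof -
      have "g^2 \<le> ?e^2" using ge g0 by (intro power_mono) auto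
      also have "?e^2 = ?q" unfolding edist_def using sqdist_nonneg by simp
      finally show ?thesis .
    qed
    have diff: "?q' - ?q = (\<Sum>i\<in>A. \<Sum>j\<in>B. a i * b j * \<Delta> i j)
      - (\<Sum>i\<in>A. \<Sum>i'\<in>A. a i * a i' * \<Delta> i i') / 2
      - (\<Sum>j\<in>B. \<Sum>j'\<in>B. b j * b j' * \<Delta> j j') / 2"
      unfolding hull_sqdist[OF a(2) b(2)] \<Delta>_def
      by (simp add: right_diff_distrib sum_subtractf diff_divide_distrib)
    have "L \<le> (\<Sum>i\<in>A. \<Sum>j\<in>B. a i * b j * \<Delta> i j)"
      using a b by (intro dsum_ge) (auto simp: \<Delta>_def A_def B_def intro!: bt)
    moreover have "(\<Sum>i\<in>A. \<Sum>i'\<in>A. a i * a i' * \<Delta> i i') \<le> U"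
      using a by (intro dsum_le) (auto simp: \<Delta>_def A_def intro!: wi)
    moreover have "(\<Sum>j\<in>B. \<Sum>j'\<in>B. b j * b j' * \<Delta> j j') \<le> U"
      using b by (intro dsum_le) (auto simp: \<Delta>_def B_def intro!: wi)
    ultimately have "?q + d \<le> ?q'" using diff d_def by linarith
    with \<open>g^2 \<le> ?q\<close> have "g^2 + d \<le> ?q'" by linarith
    thus ?thesis unfolding z edist_def by (rule real_sqrt_le_mono)
  qed
  have "sqrt (g^2 + d) \<le> Inf S'" using S'ne low by (intro cInf_greatest) auto
  moreover have "g < sqrt (g^2 + d)"
  proof -
    have "sqrt (g^2) < sqrt (g^2 + d)" using d0 by (intro real_sqrt_less_mono) simp
    thus ?thesis using g0 by simp
  qed
  ultimately have "Inf S < Inf S'" unfolding g_def by linarith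
  thus ?thesis unfolding margin_def S_def S'_def by simp
qed

theorem theorem17:
  fixes \<F> :: "pattern set" and T n s :: nat and G :: "nat \<Rightarrow> rel" and y :: "nat \<Rightarrow> bool"
    and \<gamma> :: real
  assumes "finite \<F>" and "\<forall>F\<in>\<F>. graph_on (fst F) (snd F)"
    and "\<forall>i<s. graph_on n (G i)"
    and "\<exists>i<s. y i" and "\<exists>i<s. \<not> y i"
    and "lin_separable (coords init_plain n T) s (\<lambda>i. phi_WLOA init_plain n T (G i)) y"
    and "\<gamma> = margin (coords init_plain n T) s (\<lambda>i. phi_WLOA init_plain n T (G i)) y"
    and "Min {sqdist (coords (init_F \<F>) n T) (phi_WLOA (init_F \<F>) n T (G i)) (phi_WLOA (init_F \<F>) n T (G j))
              - sqdist (coords init_plain n T) (phi_WLOA init_plain n T (G i)) (phi_WLOA init_plain n T (G j))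
            | i j. i < s \<and> j < s \<and> y i \<noteq> y j}
       > Max {sqdist (coords (init_F \<F>) n T) (phi_WLOA (init_F \<F>) n T (G i)) (phi_WLOA (init_F \<F>) n T (G j))
              - sqdist (coords init_plain n T) (phi_WLOA init_plain n T (G i)) (phi_WLOA init_plain n T (G j))
            | i j. i < s \<and> j < s \<and> y i = y j}"
  shows "margin (coords (init_F \<F>) n T) s (\<lambda>i. phi_WLOA (init_F \<F>) n T (G i)) y > \<gamma>"
proof -
  let ?I' = "coords (init_F \<F>) n T" and ?I = "coords init_plain n T"
  let ?x' = "\<lambda>i. phi_WLOA (init_F \<F>) n T (G i)" and ?x = "\<lambda>i. phi_WLOA init_plain n T (G i)"
  define f where "f i j = sqdist ?I' (?x' i) (?x' j) - sqdist ?I (?x i) (?x j)" for i j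
  define Bt where "Bt = {f i j | i j. i < s \<and> j < s \<and> y i \<noteq> y j}"
  define Wi where "Wi = {f i j | i j. i < s \<and> j < s \<and> y i = y j}"
  have fin: "finite ((\<lambda>(i, j). f i j) ` ({..<s} \<times> {..<s}))" by simp
  have fBt: "finite Bt"
    by (rule finite_subset[OF _ fin]) (auto simp: Bt_def)
  have fWi: "finite Wi"
    by (rule finite_subset[OF _ fin]) (auto simp: Wi_def)
  have MM: "Max Wi < Min Bt" using assms(8) unfolding Bt_def Wi_def f_def .
  show ?thesis
    unfolding assms(7)
  proof (rule key[where L = "Min Bt" and U = "Max Wi"])
    show "\<exists>i<s. y i" "\<exists>i<s. \<not> y i" by fact+
    show "Max Wi < Min Bt" by (rule MM)
    fix i j assume "i < s" "j < s"
    { assume "y i \<noteq> y j"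
      hence "f i j \<in> Bt" unfolding Bt_def using \<open>i < s\<close> \<open>j < s\<close> by blast
      thus "Min Bt \<le> sqdist ?I' (?x' i) (?x' j) - sqdist ?I (?x i) (?x j)"
        using Min_le[OF fBt] unfolding f_def by blast }
    { assume "y i = y j"
      hence "f i j \<in> Wi" unfolding Wi_def using \<open>i < s\<close> \<open>j < s\<close> by blast
      thus "sqdist ?I' (?x' i) (?x' j) - sqdist ?I (?x i) (?x j) \<le> Max Wi"
        using Max_ge[OF fWi] unfolding f_def by blast }
  qed
qed

end
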